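(* Let $S$ be a measurement scenario and $g\colon S\to\mathbf 2$ a possibilistic predicate such that at least one possibilistic empirical model on $S$ satisfies $g$. Then there is a possibilistic empirical model $e$ on $S$ such that $g$ is equivalent to $g(e)$, i.e. for every possibilistic empirical model $d$ on $S$: $d$ satisfies $g$ if and only if $d$ satisfies $g(e)$ (equivalently, if and only if $d\le e$).
   Context: Measurement scenarios, $\mathcal E_S(U)=\prod_{x\in U}O_{S,x}$, possibilistic empirical models (families of non-empty subsets $e_\sigma\subseteq\mathcal E_S(\sigma)$, $\sigma\in\Sigma_S$, with $e_\tau=\{s|_\tau:s\in e_\sigma\}$ for $\tau\subseteq\sigma$), their order $d\le e$ iff $d_\sigma\subseteq e_\sigma$ for all $\sigma$, deterministic procedures $f=(\pi_f,\alpha_f)$ (a simplicial relation $\pi_f$ from $\Sigma_T$ to $\Sigma_S$ and maps $\alpha_{f,x}\colon\mathcal E_S(\pi_f(x))\to O_{T,x}$), possibilistic procedures $\bigvee_if_i$ (non-empty finite sets of deterministic procedures) and their action $\mathrm{Emp}_{\mathbb B}$ are as follows: for deterministic $f$, $(\mathrm{Emp}_{\mathbb B}(f)e)_\sigma=\{(\alpha_{f,x}(s|_{\pi_f(x)}))_{x\in\sigma}: s\in e_{\pi_f(\sigma)}\}$, and $\mathrm{Emp}_{\mathbb B}(\bigvee_if_i)e$ is the contextwise union of the $\mathrm{Emp}_{\mathbb B}(f_i)e$. The scenario $\mathbf 2$ has a single measurement $*$ with outcomes $\{0,1\}$. A possibilistic predicate on $S$ is a possibilistic procedure $g\colon S\to\mathbf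 2$; a possibilistic model $e$ satisfies $g$ if $(\mathrm{Emp}_{\mathbb B}(g)e)_{\{*\}}=\{1\}$. Given a possibilistic model $e$ on $S$, the induced predicate is $g(e)=\bigvee_{\sigma\in\Sigma_S}g(e)_\sigma$, where $g(e)_\sigma$ is the deterministic procedure with $\pi( * )=\sigma$ and $\alpha_*\colon\mathcal E_S(\sigma)\to\{0,1\}$ the characteristic function of $e_\sigma$. *)

theory Defs
  imports Main "HOL-Library.FuncSet"
begin

record ('x, 'o) scenario =
  meas :: "'x set"
  ctx  :: "'x set set"
  outc :: "'x \<Rightarrow> 'o set"

definition scenario :: "('x, 'o) scenario \<Rightarrow> bool" where
  "scenario S \<longleftrightarrow> finite (meas S) \<and> ctx S \<subseteq> Pow (meas S)
     \<and> (\<forall>\<sigma>\<in>ctx S. \<forall>\<tau>. \<tau> \<subseteq> \<sigma> \<longrightarrow> \<tau> \<in> ctx S)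
     \<and> (\<forall>x\<in>meas S. {x} \<in> ctx S)
     \<and> (\<forall>x\<in>meas S. finite (outc S x) \<and> outc S x \<noteq> {})"

definition events :: "('x, 'o) scenario \<Rightarrow> 'x set \<Rightarrow> ('x \<Rightarrow> 'o) set" where
  "events S U = PiE U (outc S)"

definition poss_model :: "('x, 'o) scenario \<Rightarrow> ('x set \<Rightarrow> ('x \<Rightarrow> 'o) set) \<Rightarrow> bool" where
  "poss_model S e \<longleftrightarrow>
     (\<forall>\<sigma>\<in>ctx S. e \<sigma> \<subseteq> events S \<sigma> \<and> e \<sigma> \<noteq> {})
     \<and> (\<forall>\<sigma>\<in>ctx S. \<forall>\<tau>. \<tau> \<subseteq> \<sigma> \<longrightarrow> e \<tau> = (\<lambda>s. restrict s \<tau>) ` e \<sigma>)"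

definition poss_le :: "('x, 'o) scenario \<Rightarrow> ('x set \<Rightarrow> ('x \<Rightarrow> 'o) set)
    \<Rightarrow> ('x set \<Rightarrow> ('x \<Rightarrow> 'o) set) \<Rightarrow> bool" where
  "poss_le S d e \<longleftrightarrow> (\<forall>\<sigma>\<in>ctx S. d \<sigma> \<subseteq> e \<sigma>)"

text \<open>Deterministic procedures T \<rightarrow> S: a simplicial relation \<pi> from \<Sigma>_T to \<Sigma>_S
  (given as x \<mapsto> \<pi>(x)) and maps \<alpha>_x : \<E>_S(\<pi>(x)) \<rightarrow> O_{T,x}.\<close>
type_synonym ('y, 'x, 'o, 'p) det_proc = "('y \<Rightarrow> 'x set) \<times> ('y \<Rightarrow> ('x \<Rightarrow> 'o) \<Rightarrow> 'p)"

definition rel_image :: "('y \<Rightarrow> 'x set) \<Rightarrow> 'y set \<Rightarrow> 'x set" where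
  "rel_image \<pi> \<sigma> = (\<Union>x\<in>\<sigma>. \<pi> x)"

definition det_proc :: "('y, 'p) scenario \<Rightarrow> ('x, 'o) scenario
    \<Rightarrow> ('y, 'x, 'o, 'p) det_proc \<Rightarrow> bool" where
  "det_proc T S f \<longleftrightarrow>
     (\<forall>x. x \<notin> meas T \<longrightarrow> fst f x = {})
     \<and> (\<forall>\<sigma>\<in>ctx T. rel_image (fst f) \<sigma> \<in> ctx S)
     \<and> (\<forall>x\<in>meas T. \<forall>s\<in>events S (fst f x). snd f x s \<in> outc T x)"

definition emp_det :: "('y, 'x, 'o, 'p) det_proc \<Rightarrow> ('x set \<Rightarrow> ('x \<Rightarrow> 'o) set)
    \<Rightarrow> ('y set \<Rightarrow> ('y \<Rightarrow> 'p) set)" where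
  "emp_det f e \<sigma> =
     (\<lambda>s. \<lambda>x\<in>\<sigma>. snd f x (restrict s (fst f x))) ` e (rel_image (fst f) \<sigma>)"

definition poss_proc :: "('y, 'p) scenario \<Rightarrow> ('x, 'o) scenario
    \<Rightarrow> ('y, 'x, 'o, 'p) det_proc set \<Rightarrow> bool" where
  "poss_proc T S F \<longleftrightarrow> finite F \<and> F \<noteq> {} \<and> (\<forall>f\<in>F. det_proc T S f)"

definition emp_poss :: "('y, 'x, 'o, 'p) det_proc set \<Rightarrow> ('x set \<Rightarrow> ('x \<Rightarrow> 'o) set)
    \<Rightarrow> ('y set \<Rightarrow> ('y \<Rightarrow> 'p) set)" where
  "emp_poss F e \<sigma> = (\<Union>f\<in>F. emp_det f e \<sigma>)"

text \<open>The scenario 2: a single measurement * (the unit element) with outcomes {0,1}.\<close>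
definition scen2 :: "(unit, nat) scenario" where
  "scen2 = \<lparr>meas = {()}, ctx = {{}, {()}}, outc = (\<lambda>_. {0, 1})\<rparr>"

definition poss_predicate :: "('x, 'o) scenario \<Rightarrow> (unit, 'x, 'o, nat) det_proc set \<Rightarrow> bool" where
  "poss_predicate S g \<longleftrightarrow> poss_proc scen2 S g"

definition satisfies :: "('x set \<Rightarrow> ('x \<Rightarrow> 'o) set) \<Rightarrow> (unit, 'x, 'o, nat) det_proc set \<Rightarrow> bool" where
  "satisfies e g \<longleftrightarrow> emp_poss g e {()} = {(\<lambda>x\<in>{()}. 1)}"

text \<open>The outcome set of context {*} consists of assignments; {1} is the singleton
  containing the assignment * \<mapsto> 1.\<close>

text \<open>The predicate induced by a model e: g(e) = \<Or>_{\<sigma>\<in>\<Sigma>_S} g(e)_\<sigma>.\<close>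
definition induced_pred :: "('x, 'o) scenario \<Rightarrow> ('x set \<Rightarrow> ('x \<Rightarrow> 'o) set)
    \<Rightarrow> (unit, 'x, 'o, nat) det_proc set" where
  "induced_pred S e = (\<lambda>\<sigma>. (\<lambda>_. \<sigma>, \<lambda>_ s. if s \<in> e \<sigma> then 1 else 0)) ` ctx S"

end

theory Submission
  imports Defs
begin

lemma ri_unit: "rel_image (fst f) {()} = fst f ()" unfolding rel_image_def by blast

lemma fun_unit_eq: "(\<lambda>x\<in>{()}. (a::nat)) = (\<lambda>x\<in>{()}. b) \<longleftrightarrow> a = b"
  by (metis insertI1 restrict_apply')

lemma emp_det_unit:
  assumes "poss_model S d" "fst f () \<in> ctx S"
  shows "emp_det f d {()} = (\<lambda>s. \<lambda>x\<in>{()}. snd f () s) ` d (fst f ())"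
proof -
  have sub: "d (fst f ()) \<subseteq> PiE (fst f ()) (outc S)"
  proof -
    have "\<forall>\<sigma>\<in>ctx S. d \<sigma> \<subseteq> events S \<sigma> \<and> d \<sigma> \<noteq> {}"
      using assms(1) unfolding poss_model_def by (rule conjunct1)
    then have "d (fst f ()) \<subseteq> events S (fst f ())" using assms(2) by (meson bspec conjunct1)
    then show ?thesis unfolding events_def .
  qed
  have "\<And>s. s \<in> d (fst f ()) \<Longrightarrow> (\<lambda>x\<in>{()}. snd f x (restrict s (fst f x))) = (\<lambda>x\<in>{()}. snd f () s)"
  proof -
    fix s assume "s \<in> d (fst f ())"
    then have "s \<in> PiE (fst f ()) (outc S)" using sub by (rule subsetD[rotated])
    then have "s \<in> extensional (fst f ())" by (rule PiE_iff[THEN iffD1, THEN conjunct2])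
    then have r: "restrict s (fst f ()) = s" by (rule extensional_restrict)
    show "(\<lambda>x\<in>{()}. snd f x (restrict s (fst f x))) = (\<lambda>x\<in>{()}. snd f () s)"
      by (rule restrict_ext) (metis r singletonD)
  qed
  then show ?thesis unfolding emp_det_def ri_unit by (rule image_cong[OF refl])
qed

lemma sat_iff:
  assumes "poss_model S d" "G \<noteq> {}" "\<forall>f\<in>G. fst f () \<in> ctx S"
  shows "satisfies d G \<longleftrightarrow> (\<forall>f\<in>G. \<forall>s\<in>d (fst f ()). snd f () s = 1)"
proof -
  have ne: "\<And>f. f \<in> G \<Longrightarrow> d (fst f ()) \<noteq> {}"
  proof -
    fix f assume "f \<in> G"
    have "\<forall>\<sigma>\<in>ctx S. d \<sigma> \<subseteq> events S \<sigma> \<and> d \<sigma> \<noteq> {}"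
      using assms(1) unfolding poss_model_def by (rule conjunct1)
    then show "d (fst f ()) \<noteq> {}" using assms(3) \<open>f \<in> G\<close> by (meson bspec conjunct2)
  qed
  have "emp_poss G d {()} = (\<Union>f\<in>G. (\<lambda>s. \<lambda>x\<in>{()}. snd f () s) ` d (fst f ()))"
    unfolding emp_poss_def
  proof (rule SUP_cong[OF refl])
    fix f assume "f \<in> G"
    show "emp_det f d {()} = (\<lambda>s. \<lambda>x\<in>{()}. snd f () s) ` d (fst f ())"
      by (rule emp_det_unit[OF assms(1) bspec[OF assms(3) \<open>f \<in> G\<close>]])
  qed
  then have "satisfies d G \<longleftrightarrow> (\<Union>f\<in>G. (\<lambda>s. \<lambda>x\<in>{()}. snd f () s) ` d (fst f ())) = {(\<lambda>x\<in>{()}. 1)}"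
    unfolding satisfies_def by (rule arg_cong)
  also have "\<dots> \<longleftrightarrow> (\<forall>f\<in>G. \<forall>s\<in>d (fst f ()). snd f () s = 1)"
  proof
    assume h: "(\<Union>f\<in>G. (\<lambda>s. \<lambda>x\<in>{()}. snd f () s) ` d (fst f ())) = {(\<lambda>x\<in>{()}. 1)}"
    show "\<forall>f\<in>G. \<forall>s\<in>d (fst f ()). snd f () s = 1"
    proof (intro ballI)
      fix f s assume fG: "f \<in> G" and sd: "s \<in> d (fst f ())"
      have im: "(\<lambda>x\<in>{()}. snd f () s) \<in> (\<lambda>s. \<lambda>x\<in>{()}. snd f () s) ` d (fst f ())"
        by (rule image_eqI[where x=s], rule refl, rule sd)
      have "(\<lambda>x\<in>{()}. snd f () s) \<in> (\<Union>f\<in>G. (\<lambda>s. \<lambda>x\<in>{()}. snd f () s) ` d (fst f ()))"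
        by (rule UN_I[where a=f and B="\<lambda>f. (\<lambda>s. \<lambda>x\<in>{()}. snd f () s) ` d (fst f ())"], rule fG, rule im)
      then have "(\<lambda>x\<in>{()}. snd f () s) \<in> {(\<lambda>x\<in>{()}. 1::nat)}" unfolding h .
      then show "snd f () s = 1" by (rule fun_unit_eq[THEN iffD1, OF singletonD])
    qed
  next
    assume h: "\<forall>f\<in>G. \<forall>s\<in>d (fst f ()). snd f () s = 1"
    obtain f0 where f0: "f0 \<in> G" using assms(2) by blast
    then obtain s0 where s0: "s0 \<in> d (fst f0 ())" using ne by blast
    have A: "(\<lambda>x\<in>{()}. snd f0 () s0) \<in> (\<lambda>s. \<lambda>x\<in>{()}. snd f0 () s) ` d (fst f0 ())"
      by (rule image_eqI[where x=s0], rule refl, rule s0)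
    have B: "snd f0 () s0 = 1" using h f0 s0 by (meson bspec)
    have A': "(\<lambda>x\<in>{()}. 1::nat) \<in> (\<lambda>s. \<lambda>x\<in>{()}. snd f0 () s) ` d (fst f0 ())"
      using A unfolding B .
    have "(\<lambda>x\<in>{()}. 1::nat) \<in> (\<Union>f\<in>G. (\<lambda>s. \<lambda>x\<in>{()}. snd f () s) ` d (fst f ()))"
      by (rule UN_I[where a=f0 and B="\<lambda>f. (\<lambda>s. \<lambda>x\<in>{()}. snd f () s) ` d (fst f ())"], rule f0, rule A')
    moreover have "(\<Union>f\<in>G. (\<lambda>s. \<lambda>x\<in>{()}. snd f () s) ` d (fst f ())) \<subseteq> {(\<lambda>x\<in>{()}. 1::nat)}"
    proof
      fix y assume "y \<in> (\<Union>f\<in>G. (\<lambda>s. \<lambda>x\<in>{()}. snd f () s) ` d (fst f ()))"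
      then obtain f s where fG: "f \<in> G" and sd: "s \<in> d (fst f ())" and y: "y = (\<lambda>x\<in>{()}. snd f () s)" by blast
      have "snd f () s = 1" using h fG sd by (meson bspec)
      then show "y \<in> {(\<lambda>x\<in>{()}. 1::nat)}" unfolding y by (simp only: singleton_iff)
    qed
    ultimately show "(\<Union>f\<in>G. (\<lambda>s. \<lambda>x\<in>{()}. snd f () s) ` d (fst f ())) = {(\<lambda>x\<in>{()}. 1)}"
      by blast
  qed
  finally show ?thesis .
qed

theorem mainTheorem3:
  fixes S :: "('x, 'o) scenario"
    and g :: "(unit, 'x, 'o, nat) det_proc set"
  assumes "scenario S"
    and "poss_predicate S g"
    and "\<exists>e0. poss_model S e0 \<and> satisfies e0 g"
  shows "\<exists>e. poss_model S e \<and>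
           (\<forall>d. poss_model S d \<longrightarrow>
                (satisfies d g \<longleftrightarrow> satisfies d (induced_pred S e))
              \<and> (satisfies d g \<longleftrightarrow> poss_le S d e))"
proof -
  obtain e0 where e0: "poss_model S e0" "satisfies e0 g" using assms(3) by blast
  have gne: "g \<noteq> {}" using assms(2) unfolding poss_predicate_def poss_proc_def by blast
  have c2: "{()} \<in> ctx scen2" unfolding scen2_def by simp
  have gctx: "\<forall>f\<in>g. fst f () \<in> ctx S"
  proof
    fix f assume "f \<in> g"
    then have "det_proc scen2 S f" using assms(2) unfolding poss_predicate_def poss_proc_def by blast
    then have "rel_image (fst f) {()} \<in> ctx S" using c2 unfolding det_proc_def by blast
    then show "fst f () \<in> ctx S" unfolding ri_unit .
  qed
  define M where "M = {d. poss_model S d \<and> satisfies d g}"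
  define e where "e = (\<lambda>\<sigma>. \<Union>d\<in>M. d \<sigma>)"
  have e0M: "e0 \<in> M" using e0 unfolding M_def by blast
  have em: "poss_model S e"
    unfolding poss_model_def
  proof (intro conjI ballI allI impI)
    fix \<sigma> assume "\<sigma> \<in> ctx S"
    have "\<And>d. d \<in> M \<Longrightarrow> d \<sigma> \<subseteq> events S \<sigma>"
      using \<open>\<sigma> \<in> ctx S\<close> unfolding M_def poss_model_def by blast
    then show "e \<sigma> \<subseteq> events S \<sigma>" unfolding e_def by (rule UN_least)
    have "e0 \<sigma> \<noteq> {}" using \<open>\<sigma> \<in> ctx S\<close> e0(1) unfolding poss_model_def by blast
    moreover have "e0 \<sigma> \<subseteq> e \<sigma>" unfolding e_def using e0M by (rule UN_upper)
    ultimately show "e \<sigma> \<noteq> {}" by blast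
  next
    fix \<sigma> \<tau> assume "\<sigma> \<in> ctx S" "\<tau> \<subseteq> \<sigma>"
    then have "\<And>d. d \<in> M \<Longrightarrow> d \<tau> = (\<lambda>s. restrict s \<tau>) ` d \<sigma>"
      unfolding M_def poss_model_def by blast
    then show "e \<tau> = (\<lambda>s. restrict s \<tau>) ` e \<sigma>" unfolding e_def image_UN
      by (rule SUP_cong[OF refl])
  qed
  have key: "satisfies d g \<longleftrightarrow> poss_le S d e" if d: "poss_model S d" for d
  proof
    assume "satisfies d g"
    then have "d \<in> M" using d unfolding M_def by blast
    then show "poss_le S d e" unfolding poss_le_def e_def by blast
  next
    assume le: "poss_le S d e"
    have "\<forall>f\<in>g. \<forall>s\<in>e (fst f ()). snd f () s = 1"
    proof (intro ballI)
      fix f s assume f: "f \<in> g" and "s \<in> e (fst f ())"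
      then obtain d' where "d' \<in> M" "s \<in> d' (fst f ())" unfolding e_def by blast
      then have "poss_model S d'" "satisfies d' g" unfolding M_def by blast+
      then show "snd f () s = 1" using sat_iff[OF _ gne gctx] f \<open>s \<in> d' (fst f ())\<close> by blast
    qed
    then show "satisfies d g" unfolding sat_iff[OF d gne gctx] using le gctx unfolding poss_le_def
      by (meson subsetD)
  qed
  have key2: "satisfies d (induced_pred S e) \<longleftrightarrow> poss_le S d e" if d: "poss_model S d" for d
  proof -
    have ctxne: "ctx S \<noteq> {}" using gctx gne by blast
    have ine: "induced_pred S e \<noteq> {}" using ctxne unfolding induced_pred_def by blast
    have ictx: "\<forall>f\<in>induced_pred S e. fst f () \<in> ctx S" unfolding induced_pred_def by auto
    have "(\<forall>f\<in>induced_pred S e. \<forall>s\<in>d (fst f ()). snd f () s = 1) \<longleftrightarrow>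
       (\<forall>\<sigma>\<in>ctx S. \<forall>s\<in>d \<sigma>. s \<in> e \<sigma>)"
      unfolding induced_pred_def by auto
    then have "satisfies d (induced_pred S e) \<longleftrightarrow> (\<forall>\<sigma>\<in>ctx S. \<forall>s\<in>d \<sigma>. s \<in> e \<sigma>)"
      using sat_iff[OF d ine ictx] by blast
    also have "\<dots> \<longleftrightarrow> poss_le S d e" unfolding poss_le_def by blast
    finally show ?thesis .
  qed
  show ?thesis using em key key2 by blast
qed

end
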